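(* Let $N,M$ be positive integers, let $\mathscr{A}\subset\mathscr{M}(N,M)$ and $\mathscr{B}\subset\mathscr{M}(M,N)$ be finite sets of real matrices, and let $\|\cdot\|$ be a submultiplicative norm on $\mathscr{M}(N,N)$. Suppose that for every sequence $\{A_n\}_{n\ge1}$ with $A_n\in\mathscr{A}$ there exists a sequence $\{B_n\}_{n\ge1}$ with $B_n\in\mathscr{B}$ such that $\|A_nB_n\cdots A_1B_1\|\to0$ as $n\to\infty$. Then there exist constants $C>0$ and $\lambda\in(0,1)$ such that for every sequence $\{A_n\in\mathscr{A}\}$ there is a sequence $\{B_n\in\mathscr{B}\}$ for which \[ \|A_nB_n\cdots A_1B_1\|\le C\lambda^n,\qquad n=1,2,\ldots. \]
   Context: $\mathscr{M}(p,q)$ denotes the space of $p\times q$ real matrices with the topology of elementwise convergence. A norm on $\mathscr{M}(N,N)$ is submultiplicative if $\|XY\|\le\|X\|\,\|Y\|$ for all $X,Y$. *)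

theory Defs
  imports "HOL-Analysis.Analysis"
begin

definition submult_matrix_norm :: "(real^'n^'n \<Rightarrow> real) \<Rightarrow> bool" where
  "submult_matrix_norm nrm \<longleftrightarrow>
     (\<forall>X. 0 \<le> nrm X) \<and>
     (\<forall>X. nrm X = 0 \<longleftrightarrow> X = 0) \<and>
     (\<forall>c X. nrm (c *\<^sub>R X) = \<bar>c\<bar> * nrm X) \<and>
     (\<forall>X Y. nrm (X + Y) \<le> nrm X + nrm Y) \<and>
     (\<forall>X Y. nrm (X ** Y) \<le> nrm X * nrm Y)"

text \<open>prodAB As Bs n = A_n B_n ... A_1 B_1 (sequences indexed from 1; empty product = identity).\<close>
fun prodAB :: "(nat \<Rightarrow> real^'m^'n) \<Rightarrow> (nat \<Rightarrow> real^'n^'m) \<Rightarrow> nat \<Rightarrow> real^'n^'n" where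
  "prodAB As Bs 0 = mat 1"
| "prodAB As Bs (Suc n) = (As (Suc n) ** Bs (Suc n)) ** prodAB As Bs n"

end

theory Submission
  imports Defs
begin

lemma prodAB_dep:
  assumes "\<And>i. 1 \<le> i \<Longrightarrow> i \<le> j \<Longrightarrow> As i = As' i \<and> Bs i = Bs' i"
  shows "prodAB As Bs j = prodAB As' Bs' j"
  using assms by (induction j) auto

lemma prodAB_shift:
  "prodAB As Bs (s + j) = prodAB (\<lambda>n. As (s+n)) (\<lambda>n. Bs (s+n)) j ** prodAB As Bs s"
  by (induction j) (auto simp: matrix_mul_assoc)

lemma key:
  fixes A :: "(real^'m^'n) set" and B :: "(real^'n^'m) set"
    and nrm :: "real^'n^'n \<Rightarrow> real"
  assumes fin: "finite A" and a0: "a0 \<in> A"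
    and hyp: "\<forall>As. (\<forall>n\<ge>1. As n \<in> A) \<longrightarrow>
           (\<exists>Bs. (\<forall>n\<ge>1. Bs n \<in> B) \<and> (\<lambda>n. nrm (prodAB As Bs n)) \<longlonglongrightarrow> 0)"
  shows "\<exists>K. \<forall>As. (\<forall>n\<ge>1. As n \<in> A) \<longrightarrow> (\<exists>Bs j. (\<forall>n\<ge>1. Bs n \<in> B) \<and> 1 \<le> j \<and> j \<le> K \<and> nrm (prodAB As Bs j) \<le> 1/2)"
proof (rule ccontr)
  assume "\<not> ?thesis"
  then have "\<forall>K. \<exists>w. (\<forall>n\<ge>1. w n \<in> A) \<and> \<not> (\<exists>Bs j. (\<forall>n\<ge>1. Bs n \<in> B) \<and> 1 \<le> j \<and> j \<le> K \<and> nrm (prodAB w Bs j) \<le> 1/2)"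
    by blast
  then obtain w where w: "\<And>K. (\<forall>n\<ge>1. w K n \<in> A)"
    and wbad: "\<And>K Bs j. (\<forall>n\<ge>1. Bs n \<in> B) \<Longrightarrow> 1 \<le> j \<Longrightarrow> j \<le> K \<Longrightarrow> nrm (prodAB (w K) Bs j) > 1/2"
    by (metis not_le)
  define E where "E K v \<longleftrightarrow> infinite {L. \<forall>i. 1 \<le> i \<and> i \<le> K \<longrightarrow> w L i = v i}" for K v
  have step: "\<exists>a\<in>A. E (Suc K) (v(Suc K := a))" if "E K v" for K v
  proof -
    have sub: "{L. \<forall>i. 1 \<le> i \<and> i \<le> K \<longrightarrow> w L i = v i} \<subseteq>
       (\<Union>a\<in>A. {L. \<forall>i. 1 \<le> i \<and> i \<le> Suc K \<longrightarrow> w L i = (v(Suc K := a)) i})"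
    proof
      fix L assume L: "L \<in> {L. \<forall>i. 1 \<le> i \<and> i \<le> K \<longrightarrow> w L i = v i}"
      show "L \<in> (\<Union>a\<in>A. {L. \<forall>i. 1 \<le> i \<and> i \<le> Suc K \<longrightarrow> w L i = (v(Suc K := a)) i})"
        using w[of L] L by (intro UN_I[of "w L (Suc K)"]) (auto simp: le_Suc_eq)
    qed
    have "infinite (\<Union>a\<in>A. {L. \<forall>i. 1 \<le> i \<and> i \<le> Suc K \<longrightarrow> w L i = (v(Suc K := a)) i})"
      using that sub finite_subset unfolding E_def by blast
    then show ?thesis using fin unfolding E_def by auto
  qed
  define vs where "vs = rec_nat (\<lambda>_. a0) (\<lambda>K v. v(Suc K := (SOME a. a\<in>A \<and> E (Suc K) (v(Suc K := a)))))"
  have vs0: "vs 0 = (\<lambda>_. a0)" by (simp add: vs_def)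
  have vsS: "vs (Suc K) = (vs K)(Suc K := (SOME a. a\<in>A \<and> E (Suc K) ((vs K)(Suc K := a))))" for K
    by (simp add: vs_def)
  have EvS: "E K (vs K) \<and> (\<forall>i. vs K i \<in> A)" for K
  proof (induction K)
    case 0
    have "{L. \<forall>i. 1 \<le> i \<and> i \<le> (0::nat) \<longrightarrow> w L i = vs 0 i} = UNIV" by auto
    then show ?case using a0 by (simp add: E_def vs0)
  next
    case (Suc K)
    then have "\<exists>a. a\<in>A \<and> E (Suc K) ((vs K)(Suc K := a))" using step by blast
    from someI_ex[OF this]
    have h: "(SOME a. a\<in>A \<and> E (Suc K) ((vs K)(Suc K := a))) \<in> A"
      "E (Suc K) ((vs K)(Suc K := (SOME a. a\<in>A \<and> E (Suc K) ((vs K)(Suc K := a)))))" by blast+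
    have "E (Suc K) (vs (Suc K))" unfolding vsS by (rule h(2))
    moreover have "\<forall>i. vs (Suc K) i \<in> A" using h(1) Suc by (simp add: vsS)
    ultimately show ?case by blast
  qed
  have stab: "i \<le> K \<Longrightarrow> vs (K + d) i = vs K i" for i K d
    by (induction d) (auto simp: vsS)
  define v where "v i = vs i i" for i
  have vK: "i \<le> K \<Longrightarrow> v i = vs K i" for i K
    using stab[of i i "K - i"] by (simp add: v_def)
  have "\<forall>n\<ge>1. v n \<in> A" using EvS by (simp add: v_def)
  then obtain Bs where Bs: "\<forall>n\<ge>1. Bs n \<in> B" and lim: "(\<lambda>n. nrm (prodAB v Bs n)) \<longlonglongrightarrow> 0"
    using hyp by blast
  have "eventually (\<lambda>n. nrm (prodAB v Bs n) < 1/2) sequentially"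
    using order_tendstoD(2)[OF lim, of "1/2"] by linarith
  then obtain N where N: "\<And>n. n \<ge> N \<Longrightarrow> nrm (prodAB v Bs n) < 1/2"
    unfolding eventually_sequentially by blast
  define j where "j = Suc N"
  have "infinite {L. \<forall>i. 1 \<le> i \<and> i \<le> j \<longrightarrow> w L i = vs j i}"
    using EvS[of j] by (simp add: E_def)
  then obtain L where L: "L \<ge> j" "\<forall>i. 1 \<le> i \<and> i \<le> j \<longrightarrow> w L i = vs j i"
    unfolding infinite_nat_iff_unbounded_le by blast
  have "prodAB (w L) Bs j = prodAB v Bs j"
    by (rule prodAB_dep) (use L vK in auto)
  moreover have "nrm (prodAB (w L) Bs j) > 1/2"
    using wbad[OF Bs, of j L] L by (simp add: j_def)
  ultimately show False using N[of j] by (simp add: j_def)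
qed


lemma nat_interval:
  fixes pos :: "nat \<Rightarrow> nat"
  assumes "strict_mono pos" "pos 0 = 0"
  shows "\<exists>m. pos m \<le> n \<and> n < pos (Suc m)"
proof (induction n)
  case 0
  have "pos 0 < pos (Suc 0)" using assms(1) by (simp add: strict_mono_def)
  then show ?case using assms(2) by auto
next
  case (Suc n)
  then obtain m where m: "pos m \<le> n" "n < pos (Suc m)" by blast
  show ?case
  proof (cases "Suc n < pos (Suc m)")
    case True then show ?thesis using m by (intro exI[of _ m]) auto
  next
    case False
    then have "Suc n = pos (Suc m)" using m by auto
    moreover have "pos (Suc m) < pos (Suc (Suc m))" using assms(1) by (simp add: strict_mono_def)
    ultimately show ?thesis by (intro exI[of _ "Suc m"]) auto
  qed
qed

theorem theorem1:
  fixes \<A> :: "(real^'m^'n) set" and \<B> :: "(real^'n^'m) set"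
    and nrm :: "real^'n^'n \<Rightarrow> real"
  assumes "finite \<A>" and "finite \<B>"
    and "submult_matrix_norm nrm"
    and "\<forall>As. (\<forall>n\<ge>1. As n \<in> \<A>) \<longrightarrow>
           (\<exists>Bs. (\<forall>n\<ge>1. Bs n \<in> \<B>) \<and> (\<lambda>n. nrm (prodAB As Bs n)) \<longlonglongrightarrow> 0)"
  shows "\<exists>C lam. C > 0 \<and> 0 < lam \<and> lam < 1 \<and>
           (\<forall>As. (\<forall>n\<ge>1. As n \<in> \<A>) \<longrightarrow>
              (\<exists>Bs. (\<forall>n\<ge>1. Bs n \<in> \<B>) \<and>
                 (\<forall>n\<ge>1. nrm (prodAB As Bs n) \<le> C * lam ^ n)))"
proof (cases "\<A> = {}")
  case True
  then show ?thesis by (intro exI[of _ 1] exI[of _ "1/2"]) auto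
next
  case False
  then obtain a0 where a0: "a0 \<in> \<A>" by blast
  have nn: "\<And>X. 0 \<le> nrm X" and nz: "\<And>X. nrm X = 0 \<longleftrightarrow> X = 0"
    and sm: "\<And>X Y. nrm (X ** Y) \<le> nrm X * nrm Y"
    using assms(3) unfolding submult_matrix_norm_def by auto
  obtain K where K: "\<forall>As. (\<forall>n\<ge>1. As n \<in> \<A>) \<longrightarrow> (\<exists>Bs j. (\<forall>n\<ge>1. Bs n \<in> \<B>) \<and> 1 \<le> j \<and> j \<le> K \<and> nrm (prodAB As Bs j) \<le> 1/2)"
    using key[OF assms(1) a0 assms(4)] by blast
  obtain Bsel J where sel: "\<And>As. \<forall>n\<ge>1. As n \<in> \<A> \<Longrightarrow> (\<forall>n\<ge>1. Bsel As n \<in> \<B>) \<and> 1 \<le> J As \<and> J As \<le> K \<and> nrm (prodAB As (Bsel As) (J As)) \<le> 1/2"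
    using K by metis
  have K1: "1 \<le> K" using sel[of "\<lambda>_. a0"] a0 by auto
  define M where "M = Max ({1} \<union> (\<lambda>(a,b). nrm (a ** b)) ` (\<A> \<times> \<B>))"
  have finM: "finite ({1} \<union> (\<lambda>(a,b). nrm (a ** b)) ` (\<A> \<times> \<B>))" using assms(1,2) by auto
  have M1: "1 \<le> M" unfolding M_def using finM by (intro Max_ge) auto
  have Mab: "nrm (a ** b) \<le> M" if "a \<in> \<A>" "b \<in> \<B>" for a b
    unfolding M_def using finM that by (intro Max_ge) auto
  define c0 where "c0 = nrm (mat 1 :: real^'n^'n)"
  have "(mat 1 :: real^'n^'n) \<noteq> 0"
  proof
    assume "(mat 1 :: real^'n^'n) = 0"
    then have "(mat 1 :: real^'n^'n) $ undefined $ undefined = 0" by simp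
    then show False by (simp add: mat_def)
  qed
  then have c0: "0 < c0" unfolding c0_def using nn nz by (metis less_eq_real_def)
  have bound: "nrm (prodAB X Y r) \<le> c0 * M ^ r"
    if "\<forall>n\<ge>1. X n \<in> \<A>" "\<forall>n\<ge>1. Y n \<in> \<B>" for X Y r
  proof (induction r)
    case 0 then show ?case by (simp add: c0_def)
  next
    case (Suc r)
    have "nrm (prodAB X Y (Suc r)) \<le> nrm (X (Suc r) ** Y (Suc r)) * nrm (prodAB X Y r)"
      using sm by simp
    also have "\<dots> \<le> M * (c0 * M ^ r)"
      using Mab[of "X (Suc r)" "Y (Suc r)"] that Suc nn M1 by (intro mult_mono) auto
    finally show ?case by (simp add: algebra_simps)
  qed
  define lam where "lam = root K (1/2)"
  have lam0: "0 < lam" unfolding lam_def using K1 by simp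
  have lam1: "lam < 1" unfolding lam_def using K1 by simp
  have lamK: "lam ^ K = 1/2" unfolding lam_def using K1 by (simp add: real_root_pow_pos)
  define C where "C = 2 * c0 * c0 * M ^ K"
  have C0: "0 < C" unfolding C_def using c0 M1 by simp
  have main: "\<forall>As. (\<forall>n\<ge>1. As n \<in> \<A>) \<longrightarrow>
              (\<exists>Bs. (\<forall>n\<ge>1. Bs n \<in> \<B>) \<and>
                 (\<forall>n\<ge>1. nrm (prodAB As Bs n) \<le> C * lam ^ n))"
  proof (intro allI impI)
    fix As :: "nat \<Rightarrow> real^'m^'n" assume As: "\<forall>n\<ge>1. As n \<in> (\<A> :: (real^'m^'n) set)"
    define sh :: "nat \<Rightarrow> (nat \<Rightarrow> real^'m^'n) \<Rightarrow> nat \<Rightarrow> real^'m^'n" where "sh s X = (\<lambda>n. X (s+n))" for s X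
    have shA: "\<forall>n\<ge>1. sh s As n \<in> \<A>" for s using As by (simp add: sh_def)
    define pos where "pos = rec_nat 0 (\<lambda>m p. p + J (sh p As))"
    have pos0: "pos 0 = 0" by (simp add: pos_def)
    have posS: "pos (Suc m) = pos m + J (sh (pos m) As)" for m by (simp add: pos_def)
    note selm = sel[OF shA]
    have Jge: "1 \<le> J (sh s As)" "J (sh s As) \<le> K" for s using selm[of s] by auto
    have smono: "strict_mono pos" unfolding strict_mono_Suc_iff
    proof
      fix m show "pos m < pos (Suc m)" using posS[of m] Jge(1)[of "pos m"] by simp
    qed
    have posK: "pos m \<le> m * K" for m
    proof (induction m)
      case (Suc m) then show ?case using posS[of m] Jge(2)[of "pos m"] by simp
    qed (simp add: pos0)
    define blk where "blk n = (LEAST m. n \<le> pos (Suc m))" for n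
    have blk_eq: "blk n = m" if "pos m < n" "n \<le> pos (Suc m)" for n m
      unfolding blk_def
    proof (rule Least_equality)
      show "n \<le> pos (Suc m)" by fact
      fix m' assume "n \<le> pos (Suc m')"
      show "m \<le> m'"
      proof (rule ccontr)
        assume "\<not> m \<le> m'"
        then have "pos (Suc m') \<le> pos m" using smono by (simp add: strict_mono_less_eq)
        then show False using that \<open>n \<le> pos (Suc m')\<close> by linarith
      qed
    qed
    have ex_blk: "\<exists>m. pos m < n \<and> n \<le> pos (Suc m)" if "1 \<le> n" for n
    proof -
      obtain m where "pos m \<le> n - 1" "n - 1 < pos (Suc m)" using nat_interval[OF smono pos0] by blast
      then show ?thesis using that by (intro exI[of _ m]) auto
    qed
    define Bs where "Bs n = Bsel (sh (pos (blk n)) As) (n - pos (blk n))" for n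
    have BsB: "\<forall>n\<ge>1. Bs n \<in> \<B>"
    proof (intro allI impI)
      fix n :: nat assume "1 \<le> n"
      then obtain m where m: "pos m < n" "n \<le> pos (Suc m)" using ex_blk by blast
      then have "Bs n = Bsel (sh (pos m) As) (n - pos m)" using blk_eq by (simp add: Bs_def)
      then show "Bs n \<in> \<B>" using selm[of "pos m"] m by auto
    qed
    have shB: "\<forall>n\<ge>1. (\<lambda>n. Bs (s + n)) n \<in> \<B>" for s using BsB by simp
    have block: "nrm (prodAB (sh (pos m) As) (\<lambda>n. Bs (pos m + n)) (J (sh (pos m) As))) \<le> 1/2" for m
    proof -
      have "prodAB (sh (pos m) As) (\<lambda>n. Bs (pos m + n)) (J (sh (pos m) As))
          = prodAB (sh (pos m) As) (Bsel (sh (pos m) As)) (J (sh (pos m) As))"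
      proof (rule prodAB_dep)
        fix i assume i: "1 \<le> i" "i \<le> J (sh (pos m) As)"
        then have "blk (pos m + i) = m" using posS by (intro blk_eq) auto
        then show "sh (pos m) As i = sh (pos m) As i \<and> Bs (pos m + i) = Bsel (sh (pos m) As) i"
          by (simp add: Bs_def)
      qed
      then show ?thesis using selm[of "pos m"] by simp
    qed
    have pbound: "nrm (prodAB As Bs (pos m)) \<le> c0 * (1/2)^m" for m
    proof (induction m)
      case 0 then show ?case by (simp add: pos0 c0_def)
    next
      case (Suc m)
      have "prodAB As Bs (pos (Suc m)) = prodAB (sh (pos m) As) (\<lambda>n. Bs (pos m + n)) (J (sh (pos m) As)) ** prodAB As Bs (pos m)"
        unfolding posS prodAB_shift sh_def ..
      then have "nrm (prodAB As Bs (pos (Suc m))) \<le> nrm (prodAB (sh (pos m) As) (\<lambda>n. Bs (pos m + n)) (J (sh (pos m) As))) * nrm (prodAB As Bs (pos m))"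
        using sm by simp
      also have "\<dots> \<le> 1/2 * (c0 * (1/2)^m)"
        using block[of m] Suc nn by (intro mult_mono) auto
      finally show ?case by simp
    qed
    show "\<exists>Bs. (\<forall>n\<ge>1. Bs n \<in> \<B>) \<and> (\<forall>n\<ge>1. nrm (prodAB As Bs n) \<le> C * lam ^ n)"
    proof (rule exI[of _ Bs], rule conjI[OF BsB], intro allI impI)
      fix n :: nat assume "1 \<le> n"
      obtain m where m: "pos m \<le> n" "n < pos (Suc m)" using nat_interval[OF smono pos0] by blast
      define r where "r = n - pos m"
      have nr: "n = pos m + r" using m by (simp add: r_def)
      have rK: "r \<le> K" using m posS[of m] Jge(2)[of "pos m"] unfolding r_def by linarith
      have "nrm (prodAB As Bs n) \<le> nrm (prodAB (sh (pos m) As) (\<lambda>k. Bs (pos m + k)) r) * nrm (prodAB As Bs (pos m))"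
        unfolding nr prodAB_shift sh_def using sm by simp
      also have "\<dots> \<le> (c0 * M ^ K) * (c0 * (1/2)^m)"
      proof (intro mult_mono pbound)
        have "nrm (prodAB (sh (pos m) As) (\<lambda>k. Bs (pos m + k)) r) \<le> c0 * M ^ r"
          by (rule bound[OF shA shB])
        also have "\<dots> \<le> c0 * M ^ K" using c0 M1 rK by (intro mult_left_mono power_increasing) auto
        finally show "nrm (prodAB (sh (pos m) As) (\<lambda>k. Bs (pos m + k)) r) \<le> c0 * M ^ K" .
      qed (use c0 M1 nn in auto)
      also have "\<dots> = C * (lam ^ K) ^ (Suc m)"
        unfolding C_def lamK by (simp add: power_Suc)
      also have "\<dots> \<le> C * lam ^ n"
      proof -
        have "n \<le> K * Suc m" using m posK[of "Suc m"] by (simp add: mult.commute)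
        then have "lam ^ (K * Suc m) \<le> lam ^ n" using lam0 lam1 by (intro power_decreasing) auto
        moreover have "(lam ^ K) ^ Suc m = lam ^ (K * Suc m)" by (simp only: power_mult)
        ultimately have "(lam ^ K) ^ Suc m \<le> lam ^ n" by simp
        then show "C * (lam ^ K) ^ Suc m \<le> C * lam ^ n" using C0 by (simp add: mult_left_mono)
      qed
      finally show "nrm (prodAB As Bs n) \<le> C * lam ^ n" .
    qed
  qed
  show ?thesis using main C0 lam0 lam1 by blast
qed

end
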